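(* Let $\mathcal N$ be a finite set, $q$ a prime power, and $h\in\mathcal H[\mathcal N]$ almost $q$-representable. Let $\Delta=\{(k,\alpha):k\in\mathcal N,\ \alpha\subseteq\mathcal N,\ h(k\mid\alpha)=0\}$. Then there exists a sequence of weakly $q$-representable functions $h^\ell\in\mathcal H[\mathcal N]$ such that $\lim_{\ell\to\infty}h^\ell=h$ and $h^\ell(k\mid\alpha)=0$ for all positive integers $\ell$ and all $(k,\alpha)\in\Delta$.
   Context: $\mathcal H[\mathcal N]$ is the set of real functions on subsets of $\mathcal N$, with $h(\alpha\mid\beta)=h(\alpha\cup\beta)-h(\beta)$ and singletons identified with elements. $h$ is $q$-representable if there are subspaces $\mathbb U_i$ ($i\in\mathcal N$) of a finite-dimensional vector space over $GF(q)$ with $h(\alpha)=\dim\langle\mathbb U_i:i\in\alpha\rangle$ (dimension of the span) for every $\alpha\subseteq\mathcal N$; weakly $q$-representable if $ch$ is $q$-representable for some $c>0$; almost $q$-representable if it is the limit of a sequence of weakly $q$-representable functions. (In the paper $\mathcal N=\mathcal S\cup\mathcal E$ for a network coding problem.) *)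

theory Defs
  imports Complex_Main "HOL-Library.Function_Algebras"
begin

text \<open>Vectors over a field 'a are modelled as functions nat => 'a with pointwise
  operations; the n-dimensional coordinate space 'a^n is the set of such functions
  vanishing outside {..<n}.\<close>

definition fscale :: "'a::field \<Rightarrow> (nat \<Rightarrow> 'a) \<Rightarrow> (nat \<Rightarrow> 'a)" where
  "fscale c v = (\<lambda>i. c * v i)"

definition coord_space :: "nat \<Rightarrow> (nat \<Rightarrow> 'a::zero) set" where
  "coord_space n = {v. \<forall>i\<ge>n. v i = 0}"

definition cond_val :: "('n set \<Rightarrow> real) \<Rightarrow> 'n set \<Rightarrow> 'n set \<Rightarrow> real" where
  "cond_val h \<alpha> \<beta> = h (\<alpha> \<union> \<beta>) - h \<beta>"

text \<open>Representability over the finite field given by the type 'a (i.e. GF(q) with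
  q = CARD('a)). Only the values of h on subsets of N matter.\<close>
definition representable ::
  "'a::field itself \<Rightarrow> 'n set \<Rightarrow> ('n set \<Rightarrow> real) \<Rightarrow> bool" where
  "representable _ N h \<longleftrightarrow>
     (\<exists>(n::nat) (U :: 'n \<Rightarrow> (nat \<Rightarrow> 'a) set).
        (\<forall>i\<in>N. module.subspace (fscale :: 'a \<Rightarrow> _) (U i) \<and> U i \<subseteq> coord_space n) \<and>
        (\<forall>\<alpha>\<subseteq>N. h \<alpha> = real (vector_space.dim (fscale :: 'a \<Rightarrow> _) (\<Union>i\<in>\<alpha>. U i))))"

definition weakly_representable ::
  "'a::field itself \<Rightarrow> 'n set \<Rightarrow> ('n set \<Rightarrow> real) \<Rightarrow> bool" where
  "weakly_representable F N h \<longleftrightarrow> (\<exists>c>0. representable F N (\<lambda>\<alpha>. c * h \<alpha>))"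

definition converges_on :: "'n set \<Rightarrow> (nat \<Rightarrow> 'n set \<Rightarrow> real) \<Rightarrow> ('n set \<Rightarrow> real) \<Rightarrow> bool" where
  "converges_on N g h \<longleftrightarrow> (\<forall>\<alpha>\<subseteq>N. (\<lambda>l. g l \<alpha>) \<longlonglongrightarrow> h \<alpha>)"

definition almost_representable ::
  "'a::field itself \<Rightarrow> 'n set \<Rightarrow> ('n set \<Rightarrow> real) \<Rightarrow> bool" where
  "almost_representable F N h \<longleftrightarrow>
     (\<exists>g. (\<forall>l. weakly_representable F N (g l)) \<and> converges_on N g h)"

end

theory Submission
  imports Defs
begin

lemma (in vector_space) key:
  fixes U :: "'i \<Rightarrow> 'b set" and N :: "'i set" and C E :: "'b set"
    and D :: "('i \<times> 'i set) set"
  assumes E: "finite E" and CE: "C \<subseteq> span E" and sC: "subspace C"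
    and UC: "\<forall>i\<in>N. subspace (U i) \<and> U i \<subseteq> C" and fD: "finite D" and DN: "D \<subseteq> N \<times> Pow N"
  shows "\<exists>U'. (\<forall>i\<in>N. subspace (U' i) \<and> U' i \<subseteq> C) \<and>
     (\<forall>\<beta>\<subseteq>N. dim (\<Union>i\<in>\<beta>. U' i) \<le> dim (\<Union>i\<in>\<beta>. U i) \<and>
        dim (\<Union>i\<in>\<beta>. U i) \<le> dim (\<Union>i\<in>\<beta>. U' i) +
           (\<Sum>\<delta>\<in>D. dim (U (fst \<delta>) \<union> (\<Union>i\<in>snd \<delta>. U i)) - dim (\<Union>i\<in>snd \<delta>. U i))) \<and>
     (\<forall>\<delta>\<in>D. dim (U' (fst \<delta>) \<union> (\<Union>i\<in>snd \<delta>. U' i)) = dim (\<Union>i\<in>snd \<delta>. U' i))"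
proof -
  have fin_ind: "\<And>S. independent S \<Longrightarrow> S \<subseteq> C \<Longrightarrow> finite S"
    using independent_span_bound[OF E] CE by blast
  define Y where "Y \<alpha> = (\<Union>i\<in>\<alpha>. U i)" for \<alpha>
  have YC: "\<And>\<alpha>. \<alpha> \<subseteq> N \<Longrightarrow> Y \<alpha> \<subseteq> C" using UC unfolding Y_def by blast
  have exT: "\<forall>\<delta>\<in>D. \<exists>T. finite T \<and> T \<subseteq> C \<and>
     card T \<le> dim (U (fst \<delta>) \<union> Y (snd \<delta>)) - dim (Y (snd \<delta>)) \<and>
     U (fst \<delta>) \<subseteq> span (Y (snd \<delta>) \<union> T)"
  proof
    fix \<delta> assume "\<delta> \<in> D"
    then obtain k \<alpha> where \<delta>: "\<delta> = (k,\<alpha>)" "k \<in> N" "\<alpha> \<subseteq> N" using DN by auto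
    obtain A where A: "A \<subseteq> Y \<alpha>" "independent A" "Y \<alpha> \<subseteq> span A" "card A = dim (Y \<alpha>)"
      by (rule basis_exists)
    have AZ: "A \<subseteq> U k \<union> Y \<alpha>" using A by blast
    obtain B where B: "A \<subseteq> B" "B \<subseteq> U k \<union> Y \<alpha>" "independent B" "U k \<union> Y \<alpha> \<subseteq> span B"
      by (rule maximal_independent_subset_extend[OF AZ A(2)])
    have BC: "B \<subseteq> C" using B(2) YC[OF \<delta>(3)] UC \<delta>(2) by blast
    have fB: "finite B" using fin_ind[OF B(3) BC] .
    have cB: "card B = dim (U k \<union> Y \<alpha>)" using basis_card_eq_dim[OF B(2) B(4) B(3)] .
    have cD: "card (B - A) = card B - card A"
      using card_Diff_subset[OF finite_subset[OF B(1) fB] B(1)] .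
    have "U k \<subseteq> span B" using B(4) by blast
    also have "span B \<subseteq> span (Y \<alpha> \<union> (B - A))"
      by (rule span_mono) (use A(1) in blast)
    finally have "U k \<subseteq> span (Y \<alpha> \<union> (B - A))" .
    then show "\<exists>T. finite T \<and> T \<subseteq> C \<and>
     card T \<le> dim (U (fst \<delta>) \<union> Y (snd \<delta>)) - dim (Y (snd \<delta>)) \<and>
     U (fst \<delta>) \<subseteq> span (Y (snd \<delta>) \<union> T)"
      using fB BC cB cD A(4) \<delta>(1) by (intro exI[of _ "B - A"]) auto
  qed
  from bchoice[OF exT] obtain T where T0: "\<forall>\<delta>\<in>D. finite (T \<delta>) \<and> T \<delta> \<subseteq> C \<and>
     card (T \<delta>) \<le> dim (U (fst \<delta>) \<union> Y (snd \<delta>)) - dim (Y (snd \<delta>)) \<and>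
     U (fst \<delta>) \<subseteq> span (Y (snd \<delta>) \<union> T \<delta>)" ..
  have T: "finite (T \<delta>) \<and> T \<delta> \<subseteq> C \<and>
     card (T \<delta>) \<le> dim (U (fst \<delta>) \<union> Y (snd \<delta>)) - dim (Y (snd \<delta>)) \<and>
     U (fst \<delta>) \<subseteq> span (Y (snd \<delta>) \<union> T \<delta>)" if "\<delta>\<in>D" for \<delta>
    using bspec[OF T0 that] .
  define TT where "TT = (\<Union>\<delta>\<in>D. T \<delta>)"
  have fTT: "finite TT" unfolding TT_def using fD T by blast
  have TTC: "TT \<subseteq> C" unfolding TT_def using T by blast
  have cTT: "card TT \<le> (\<Sum>\<delta>\<in>D. dim (U (fst \<delta>) \<union> Y (snd \<delta>)) - dim (Y (snd \<delta>)))"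
  proof -
    have "card TT \<le> (\<Sum>\<delta>\<in>D. card (T \<delta>))" unfolding TT_def by (rule card_UN_le[OF fD])
    also have "\<dots> \<le> (\<Sum>\<delta>\<in>D. dim (U (fst \<delta>) \<union> Y (snd \<delta>)) - dim (Y (snd \<delta>)))"
      by (rule sum_mono) (use T in blast)
    finally show ?thesis .
  qed
  obtain BW where BW: "BW \<subseteq> TT" "independent BW" "TT \<subseteq> span BW" "card BW = dim TT"
    by (rule basis_exists)
  have cBW: "card BW \<le> card TT" using card_mono[OF fTT BW(1)] .
  have BWC: "span BW \<subseteq> C" using BW(1) TTC sC span_minimal by blast
  interpret vp: vector_space_pair scale scale ..
  define Q where "Q = vp.construct BW id"
  define P where "P x = x - Q x" for x
  have linQ: "Vector_Spaces.linear scale scale Q" unfolding Q_def by (rule vp.linear_construct[OF BW(2)])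
  have linP: "Vector_Spaces.linear scale scale P"
    unfolding P_def[abs_def]
    by (rule vp.linear_compose_sub[OF module_hom_ident linQ])
  have Qspan: "\<And>x. Q x \<in> span BW"
    using vp.construct_in_span[OF BW(2), of id] unfolding Q_def by simp
  have PBW: "\<And>b. b \<in> BW \<Longrightarrow> P b = 0"
    unfolding P_def Q_def using vp.construct_basis[OF BW(2)] by simp
  have P0: "\<And>x. x \<in> span BW \<Longrightarrow> P x = 0"
    using vp.linear_eq_0_on_span[OF linP] PBW by blast
  have PC: "\<And>x. x \<in> C \<Longrightarrow> P x \<in> C"
    unfolding P_def using Qspan BWC subspace_diff[OF sC] by blast
  have Pimg: "\<And>S. span (P ` S) = P ` span S" using vp.linear_span_image[OF linP] .
  define U' where "U' i = P ` U i" for i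
  have UU: "\<And>\<beta>. (\<Union>i\<in>\<beta>. U' i) = P ` Y \<beta>" unfolding U'_def Y_def by auto
  have part1: "\<forall>i\<in>N. subspace (U' i) \<and> U' i \<subseteq> C"
    using UC PC vp.linear_subspace_image[OF linP] unfolding U'_def by blast
  have part2: "dim (P ` Y \<beta>) \<le> dim (Y \<beta>) \<and>
        dim (Y \<beta>) \<le> dim (P ` Y \<beta>) + card BW" if "\<beta> \<subseteq> N" for \<beta>
  proof
    obtain A where A: "A \<subseteq> Y \<beta>" "independent A" "Y \<beta> \<subseteq> span A" "card A = dim (Y \<beta>)"
      by (rule basis_exists)
    have fA: "finite A" using fin_ind[OF A(2)] A(1) YC[OF that] by blast
    have "P ` Y \<beta> \<subseteq> span (P ` A)" using A(3) Pimg by blast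
    then have "dim (P ` Y \<beta>) \<le> card (P ` A)" using dim_le_card fA by blast
    also have "\<dots> \<le> card A" using card_image_le[OF fA] .
    finally show "dim (P ` Y \<beta>) \<le> dim (Y \<beta>)" using A(4) by simp
  next
    obtain A where A: "A \<subseteq> P ` Y \<beta>" "independent A" "P ` Y \<beta> \<subseteq> span A" "card A = dim (P ` Y \<beta>)"
      by (rule basis_exists)
    have fA: "finite A" using fin_ind[OF A(2)] A(1) YC[OF that] PC by blast
    have fBW: "finite BW" using finite_subset[OF BW(1) fTT] .
    have "Y \<beta> \<subseteq> span (A \<union> BW)"
    proof
      fix x assume x: "x \<in> Y \<beta>"
      have "P x \<in> span (A \<union> BW)" using A(3) x span_mono[of A "A \<union> BW"] by blast
      moreover have "Q x \<in> span (A \<union> BW)" using Qspan span_mono[of BW "A \<union> BW"] by blast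
      ultimately have "P x + Q x \<in> span (A \<union> BW)" by (rule span_add)
      then show "x \<in> span (A \<union> BW)" unfolding P_def by simp
    qed
    then have "dim (Y \<beta>) \<le> card (A \<union> BW)" using dim_le_card fA fBW by blast
    also have "\<dots> \<le> card A + card BW" by (rule card_Un_le)
    finally show "dim (Y \<beta>) \<le> dim (P ` Y \<beta>) + card BW" using A(4) by simp
  qed
  have part3: "dim (U' (fst \<delta>) \<union> P ` Y (snd \<delta>)) = dim (P ` Y (snd \<delta>))" if "\<delta> \<in> D" for \<delta>
  proof -
    have "U (fst \<delta>) \<subseteq> span (Y (snd \<delta>) \<union> T \<delta>)" using T[OF that] by blast
    also have "\<dots> \<subseteq> span (Y (snd \<delta>) \<union> BW)"
    proof (rule span_minimal[OF _ subspace_span])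
      show "Y (snd \<delta>) \<union> T \<delta> \<subseteq> span (Y (snd \<delta>) \<union> BW)"
        using span_superset[of "Y (snd \<delta>) \<union> BW"] span_mono[of BW "Y (snd \<delta>) \<union> BW"] BW(3)
          that unfolding TT_def by blast
    qed
    finally have "U' (fst \<delta>) \<subseteq> P ` span (Y (snd \<delta>) \<union> BW)" unfolding U'_def by blast
    also have "\<dots> = span (P ` Y (snd \<delta>) \<union> P ` BW)" using Pimg[of "Y (snd \<delta>) \<union> BW"] by (simp add: image_Un)
    also have "\<dots> \<subseteq> span (P ` Y (snd \<delta>))"
      by (rule span_minimal[OF _ subspace_span]) (use span_superset span_zero PBW in auto)
    finally have sub: "U' (fst \<delta>) \<subseteq> span (P ` Y (snd \<delta>))" .
    have "span (U' (fst \<delta>) \<union> P ` Y (snd \<delta>)) = span (P ` Y (snd \<delta>))"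
    proof (rule span_eq[THEN iffD2], rule conjI)
      show "U' (fst \<delta>) \<union> P ` Y (snd \<delta>) \<subseteq> span (P ` Y (snd \<delta>))"
        using sub span_superset[of "P ` Y (snd \<delta>)"] by (rule Un_least)
      show "P ` Y (snd \<delta>) \<subseteq> span (U' (fst \<delta>) \<union> P ` Y (snd \<delta>))"
        by (meson Un_upper2 span_superset subset_trans)
    qed
    then show ?thesis by (rule span_eq_dim)
  qed
  show ?thesis
  proof (intro exI[of _ U'] conjI part1 allI impI ballI)
    fix \<beta> assume b: "\<beta> \<subseteq> N"
    show "dim (\<Union>i\<in>\<beta>. U' i) \<le> dim (\<Union>i\<in>\<beta>. U i)"
      using part2[OF b] unfolding UU Y_def by blast
    show "dim (\<Union>i\<in>\<beta>. U i) \<le> dim (\<Union>i\<in>\<beta>. U' i) +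
           (\<Sum>\<delta>\<in>D. dim (U (fst \<delta>) \<union> (\<Union>i\<in>snd \<delta>. U i)) - dim (\<Union>i\<in>snd \<delta>. U i))"
      using part2[OF b] cTT cBW unfolding UU Y_def by linarith
  next
    fix \<delta> assume "\<delta> \<in> D"
    then show "dim (U' (fst \<delta>) \<union> (\<Union>i\<in>snd \<delta>. U' i)) = dim (\<Union>i\<in>snd \<delta>. U' i)"
      using part3 unfolding UU by blast
  qed
qed


lemma (in vector_space) dim_mono_fin:
  assumes E: "finite E" and Z: "Z \<subseteq> span E" and YZ: "Y \<subseteq> Z"
  shows "dim Y \<le> dim Z"
proof -
  obtain A where A: "A \<subseteq> Y" "independent A" "Y \<subseteq> span A" "card A = dim Y"
    by (rule basis_exists)
  have AZ: "A \<subseteq> Z" using A(1) YZ by blast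
  obtain B where B: "A \<subseteq> B" "B \<subseteq> Z" "independent B" "Z \<subseteq> span B"
    by (rule maximal_independent_subset_extend[OF AZ A(2)])
  have fB: "finite B" using independent_span_bound[OF E B(3)] B(2) Z by blast
  have "card B = dim Z" using basis_card_eq_dim[OF B(2) B(4) B(3)] .
  moreover have "card A \<le> card B" using card_mono[OF fB B(1)] .
  ultimately show ?thesis using A(4) by simp
qed

lemma fscale_vs: "vector_space (fscale :: 'a::field \<Rightarrow> (nat \<Rightarrow> 'a) \<Rightarrow> _)"
  by unfold_locales (auto simp: fscale_def fun_eq_iff algebra_simps)

lemma sum_fun_apply: "(sum f A) x = (\<Sum>a\<in>A. f a x)"
  by (induction A rule: infinite_finite_induct) (auto simp: plus_fun_def)

lemma step:
  fixes N :: "'n set" and g :: "'n set \<Rightarrow> real" and F :: "'a::field itself"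
    and D :: "('n \<times> 'n set) set"
  assumes fN: "finite N" and rep: "representable F N (\<lambda>\<alpha>. c * g \<alpha>)" and c: "c > 0"
    and DN: "D \<subseteq> N \<times> Pow N"
  shows "\<exists>f. weakly_representable F N f \<and>
     (\<forall>\<beta>\<subseteq>N. \<bar>f \<beta> - g \<beta>\<bar> \<le> (\<Sum>\<delta>\<in>D. cond_val g {fst \<delta>} (snd \<delta>))) \<and>
     (\<forall>\<delta>\<in>D. cond_val f {fst \<delta>} (snd \<delta>) = 0)"
proof -
  interpret V: vector_space "fscale :: 'a \<Rightarrow> (nat \<Rightarrow> 'a) \<Rightarrow> _" by (rule fscale_vs)
  obtain n and U :: "'n \<Rightarrow> (nat \<Rightarrow> 'a) set" where
    UC: "\<forall>i\<in>N. V.subspace (U i) \<and> U i \<subseteq> coord_space n" and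
    Ud: "\<forall>\<alpha>\<subseteq>N. c * g \<alpha> = real (V.dim (\<Union>i\<in>\<alpha>. U i))"
    using rep unfolding representable_def by blast
  define e :: "nat \<Rightarrow> nat \<Rightarrow> 'a" where "e i = (\<lambda>j. if j = i then 1 else 0)" for i
  define E where "E = e ` {..<n}"
  have fE: "finite E" unfolding E_def by simp
  have CE: "coord_space n \<subseteq> V.span E"
  proof
    fix x :: "nat \<Rightarrow> 'a" assume "x \<in> coord_space n"
    then have x0: "\<forall>i\<ge>n. x i = 0" unfolding coord_space_def by simp
    have "x = (\<Sum>i<n. fscale (x i) (e i))"
    proof
      fix j
      show "x j = (\<Sum>i<n. fscale (x i) (e i)) j"
        using x0 by (cases "j < n") (auto simp: sum_fun_apply fscale_def e_def not_less if_distrib sum.delta cong: if_cong)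
    qed
    also have "\<dots> \<in> V.span E"
      by (intro V.span_sum V.span_scale V.span_base) (auto simp: E_def)
    finally show "x \<in> V.span E" .
  qed
  have sC: "V.subspace (coord_space n)"
    unfolding V.subspace_def coord_space_def by (auto simp: fscale_def)
  have fD: "finite D" using finite_subset[OF DN] fN by blast
  obtain U' where U'C: "\<forall>i\<in>N. V.subspace (U' i) \<and> U' i \<subseteq> coord_space n"
    and U'd: "\<forall>\<beta>\<subseteq>N. V.dim (\<Union>i\<in>\<beta>. U' i) \<le> V.dim (\<Union>i\<in>\<beta>. U i) \<and>
        V.dim (\<Union>i\<in>\<beta>. U i) \<le> V.dim (\<Union>i\<in>\<beta>. U' i) +
           (\<Sum>\<delta>\<in>D. V.dim (U (fst \<delta>) \<union> (\<Union>i\<in>snd \<delta>. U i)) - V.dim (\<Union>i\<in>snd \<delta>. U i))"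
    and U'z: "\<forall>\<delta>\<in>D. V.dim (U' (fst \<delta>) \<union> (\<Union>i\<in>snd \<delta>. U' i)) = V.dim (\<Union>i\<in>snd \<delta>. U' i)"
    using V.key[OF fE CE sC UC fD DN] by blast
  define f where "f \<beta> = real (V.dim (\<Union>i\<in>\<beta>. U' i)) / c" for \<beta>
  have wr: "weakly_representable F N f"
    unfolding weakly_representable_def representable_def
    using c U'C by (intro exI[of _ c] conjI exI[of _ n] exI[of _ U']) (auto simp: f_def)
  have cv: "real (V.dim (U (fst \<delta>) \<union> (\<Union>i\<in>snd \<delta>. U i)) - V.dim (\<Union>i\<in>snd \<delta>. U i))
      = c * cond_val g {fst \<delta>} (snd \<delta>)" if "\<delta> \<in> D" for \<delta>
  proof -
    have k: "fst \<delta> \<in> N" and a: "snd \<delta> \<subseteq> N" using DN[THEN subsetD, OF that] unfolding mem_Times_iff Pow_iff by simp_all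
    have un: "(\<Union>i\<in>{fst \<delta>} \<union> snd \<delta>. U i) = U (fst \<delta>) \<union> (\<Union>i\<in>snd \<delta>. U i)" by auto
    have "(\<Union>i\<in>{fst \<delta>} \<union> snd \<delta>. U i) \<subseteq> V.span E"
      using UC k a CE by blast
    then have le: "V.dim (\<Union>i\<in>snd \<delta>. U i) \<le> V.dim (U (fst \<delta>) \<union> (\<Union>i\<in>snd \<delta>. U i))"
      using V.dim_mono_fin[OF fE] un by (metis Un_upper2)
    have "c * cond_val g {fst \<delta>} (snd \<delta>) = c * g ({fst \<delta>} \<union> snd \<delta>) - c * g (snd \<delta>)"
      by (simp add: cond_val_def algebra_simps)
    also have "\<dots> = real (V.dim (U (fst \<delta>) \<union> (\<Union>i\<in>snd \<delta>. U i))) - real (V.dim (\<Union>i\<in>snd \<delta>. U i))"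
      using Ud k a un by simp
    finally show ?thesis using le by (simp add: of_nat_diff)
  qed
  have bound: "\<bar>f \<beta> - g \<beta>\<bar> \<le> (\<Sum>\<delta>\<in>D. cond_val g {fst \<delta>} (snd \<delta>))" if b: "\<beta> \<subseteq> N" for \<beta>
  proof -
    let ?S = "(\<Sum>\<delta>\<in>D. V.dim (U (fst \<delta>) \<union> (\<Union>i\<in>snd \<delta>. U i)) - V.dim (\<Union>i\<in>snd \<delta>. U i))"
    have S: "real ?S = c * (\<Sum>\<delta>\<in>D. cond_val g {fst \<delta>} (snd \<delta>))"
      using cv by (simp add: sum_distrib_left)
    have d1: "real (V.dim (\<Union>i\<in>\<beta>. U' i)) \<le> c * g \<beta>" using U'd b Ud by simp
    have d2: "c * g \<beta> \<le> real (V.dim (\<Union>i\<in>\<beta>. U' i)) + real ?S"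
    proof -
      have n2: "V.dim (\<Union>i\<in>\<beta>. U i) \<le> V.dim (\<Union>i\<in>\<beta>. U' i) + ?S" using U'd b by blast
      have "c * g \<beta> = real (V.dim (\<Union>i\<in>\<beta>. U i))" using Ud b by blast
      also have "\<dots> \<le> real (V.dim (\<Union>i\<in>\<beta>. U' i) + ?S)" using n2 by (rule of_nat_mono)
      finally show ?thesis by simp
    qed
    have "c * \<bar>f \<beta> - g \<beta>\<bar> = \<bar>real (V.dim (\<Union>i\<in>\<beta>. U' i)) - c * g \<beta>\<bar>"
    proof -
      have "c * \<bar>f \<beta> - g \<beta>\<bar> = \<bar>c * (f \<beta> - g \<beta>)\<bar>" using c by (simp add: abs_mult)
      also have "c * (f \<beta> - g \<beta>) = real (V.dim (\<Union>i\<in>\<beta>. U' i)) - c * g \<beta>"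
        using c by (simp add: f_def right_diff_distrib)
      finally show ?thesis .
    qed
    also have "\<dots> \<le> real ?S" using d1 d2 by linarith
    finally show ?thesis using S c by simp
  qed
  have z: "cond_val f {fst \<delta>} (snd \<delta>) = 0" if "\<delta> \<in> D" for \<delta>
  proof -
    have "(\<Union>i\<in>{fst \<delta>} \<union> snd \<delta>. U' i) = U' (fst \<delta>) \<union> (\<Union>i\<in>snd \<delta>. U' i)" by auto
    then show ?thesis using U'z that by (simp add: cond_val_def f_def)
  qed
  show ?thesis using wr bound z by blast
qed

theorem proposition5:
  fixes N :: "'n set" and h :: "'n set \<Rightarrow> real"
    and F :: "'a::{field,finite} itself"
  assumes "finite N"
    and "almost_representable F N h"
  shows "\<exists>hs :: nat \<Rightarrow> 'n set \<Rightarrow> real.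
           (\<forall>l. weakly_representable F N (hs l)) \<and>
           converges_on N hs h \<and>
           (\<forall>l. \<forall>k\<in>N. \<forall>\<alpha>\<subseteq>N. cond_val h {k} \<alpha> = 0 \<longrightarrow> cond_val (hs l) {k} \<alpha> = 0)"
proof -
  obtain g where gw: "\<forall>l. weakly_representable F N (g l)" and gc: "converges_on N g h"
    using assms(2) unfolding almost_representable_def by blast
  define D where "D = {\<delta>. fst \<delta> \<in> N \<and> snd \<delta> \<subseteq> N \<and> cond_val h {fst \<delta>} (snd \<delta>) = 0}"
  have DN: "D \<subseteq> N \<times> Pow N" unfolding D_def by auto
  have fD: "finite D" using finite_subset[OF DN] assms(1) by blast
  have "\<forall>l. \<exists>f. weakly_representable F N f \<and>
     (\<forall>\<beta>\<subseteq>N. \<bar>f \<beta> - g l \<beta>\<bar> \<le> (\<Sum>\<delta>\<in>D. cond_val (g l) {fst \<delta>} (snd \<delta>))) \<and>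
     (\<forall>\<delta>\<in>D. cond_val f {fst \<delta>} (snd \<delta>) = 0)"
  proof
    fix l
    obtain c where c: "c > 0" "representable F N (\<lambda>\<alpha>. c * g l \<alpha>)"
      using gw unfolding weakly_representable_def by blast
    show "\<exists>f. weakly_representable F N f \<and>
     (\<forall>\<beta>\<subseteq>N. \<bar>f \<beta> - g l \<beta>\<bar> \<le> (\<Sum>\<delta>\<in>D. cond_val (g l) {fst \<delta>} (snd \<delta>))) \<and>
     (\<forall>\<delta>\<in>D. cond_val f {fst \<delta>} (snd \<delta>) = 0)"
      by (rule step[OF assms(1) c(2) c(1) DN])
  qed
  from choice[OF this] obtain hs where hs0: "\<forall>l. weakly_representable F N (hs l) \<and>
     (\<forall>\<beta>\<subseteq>N. \<bar>hs l \<beta> - g l \<beta>\<bar> \<le> (\<Sum>\<delta>\<in>D. cond_val (g l) {fst \<delta>} (snd \<delta>))) \<and>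
     (\<forall>\<delta>\<in>D. cond_val (hs l) {fst \<delta>} (snd \<delta>) = 0)" ..
  have hs: "\<And>l. weakly_representable F N (hs l)"
    "\<And>l \<beta>. \<beta> \<subseteq> N \<Longrightarrow> \<bar>hs l \<beta> - g l \<beta>\<bar> \<le> (\<Sum>\<delta>\<in>D. cond_val (g l) {fst \<delta>} (snd \<delta>))"
    "\<And>l \<delta>. \<delta> \<in> D \<Longrightarrow> cond_val (hs l) {fst \<delta>} (snd \<delta>) = 0"
    using hs0 by blast+
  have Sl: "(\<lambda>l. \<Sum>\<delta>\<in>D. cond_val (g l) {fst \<delta>} (snd \<delta>)) \<longlonglongrightarrow> 0"
  proof -
    have "(\<lambda>l. \<Sum>\<delta>\<in>D. cond_val (g l) {fst \<delta>} (snd \<delta>)) \<longlonglongrightarrow> (\<Sum>\<delta>\<in>D. cond_val h {fst \<delta>} (snd \<delta>))"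
    proof (rule tendsto_sum)
      fix \<delta> assume "\<delta> \<in> D"
      then have k: "fst \<delta> \<in> N" and a: "snd \<delta> \<subseteq> N" unfolding D_def by auto
      have "(\<lambda>l. g l ({fst \<delta>} \<union> snd \<delta>) - g l (snd \<delta>)) \<longlonglongrightarrow> h ({fst \<delta>} \<union> snd \<delta>) - h (snd \<delta>)"
        using gc k a unfolding converges_on_def by (intro tendsto_diff) auto
      then show "(\<lambda>l. cond_val (g l) {fst \<delta>} (snd \<delta>)) \<longlonglongrightarrow> cond_val h {fst \<delta>} (snd \<delta>)"
        unfolding cond_val_def .
    qed
    moreover have "(\<Sum>\<delta>\<in>D. cond_val h {fst \<delta>} (snd \<delta>)) = 0" unfolding D_def by simp
    ultimately show ?thesis by simp
  qed
  have conv: "converges_on N hs h"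
    unfolding converges_on_def
  proof (intro allI impI)
    fix \<beta> assume b: "\<beta> \<subseteq> N"
    have g: "(\<lambda>l. g l \<beta>) \<longlonglongrightarrow> h \<beta>" using gc b unfolding converges_on_def by blast
    have lo: "(\<lambda>l. g l \<beta> - (\<Sum>\<delta>\<in>D. cond_val (g l) {fst \<delta>} (snd \<delta>))) \<longlonglongrightarrow> h \<beta> - 0"
      by (intro tendsto_diff g Sl)
    have hi: "(\<lambda>l. g l \<beta> + (\<Sum>\<delta>\<in>D. cond_val (g l) {fst \<delta>} (snd \<delta>))) \<longlonglongrightarrow> h \<beta> + 0"
      by (intro tendsto_add g Sl)
    show "(\<lambda>l. hs l \<beta>) \<longlonglongrightarrow> h \<beta>"
    proof (rule tendsto_sandwich[OF _ _ lo[simplified] hi[simplified]])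
      show "\<forall>\<^sub>F l in sequentially. g l \<beta> - (\<Sum>\<delta>\<in>D. cond_val (g l) {fst \<delta>} (snd \<delta>)) \<le> hs l \<beta>"
        using hs(2)[OF b] by (intro always_eventually allI) (smt (verit))
      show "\<forall>\<^sub>F l in sequentially. hs l \<beta> \<le> g l \<beta> + (\<Sum>\<delta>\<in>D. cond_val (g l) {fst \<delta>} (snd \<delta>))"
        using hs(2)[OF b] by (intro always_eventually allI) (smt (verit))
    qed
  qed
  have zero: "\<forall>l. \<forall>k\<in>N. \<forall>\<alpha>\<subseteq>N. cond_val h {k} \<alpha> = 0 \<longrightarrow> cond_val (hs l) {k} \<alpha> = 0"
  proof (intro allI ballI impI)
    fix l k \<alpha> assume "k \<in> N" "\<alpha> \<subseteq> N" "cond_val h {k} \<alpha> = 0"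
    then have "(k, \<alpha>) \<in> D" unfolding D_def by simp
    from hs(3)[OF this, of l] show "cond_val (hs l) {k} \<alpha> = 0" by simp
  qed
  show ?thesis using hs(1) conv zero by blast
qed

end
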